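(* Let $n\ge t\ge 1$ be integers and $\Bbbk$ a field. For every integer $p$, $$\widetilde{H}_p(\Omega^n_t;\Bbbk)\cong\begin{cases}\widetilde{H}_{p+1-\frac{2n}{t+1}}(\{\emptyset\};\Bbbk) & \text{if } n\equiv 0 \pmod{t+1},\\ \widetilde{H}_{p+2-\frac{2(n+1)}{t+1}}(\{\emptyset\};\Bbbk) & \text{if } n\equiv t \pmod{t+1},\\ 0 & \text{otherwise.}\end{cases}$$
   Context: For integers $n\ge t\ge 1$, $\Omega^n_t$ is the simplicial complex on vertex set $\{1,\dots,n\}$ whose facets are the sets $\{1,\dots,n\}\setminus\{i,i+1,\dots,i+t-1\}$ for $i=1,\dots,n-t+1$ (so $\Omega^t_t=\{\emptyset\}$). $\widetilde{H}_p(\cdot;\Bbbk)$ denotes reduced simplicial homology over $\Bbbk$. The irrelevant complex $\{\emptyset\}$ has $\widetilde{H}_{-1}(\{\emptyset\};\Bbbk)\cong\Bbbk$ and $\widetilde{H}_p(\{\emptyset\};\Bbbk)=0$ for $p\neq -1$. *)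

theory Defs
  imports Main "HOL.Vector_Spaces" "HOL-Library.Function_Algebras"
begin

text \<open>A simplicial complex is represented by its set of faces (finite sets of
vertices, closed under subsets, containing the empty face).\<close>

definition Omega :: "nat \<Rightarrow> nat \<Rightarrow> nat set set" where
  "Omega n t = {F. \<exists>i\<in>{1..n - t + 1}. F \<subseteq> {1..n} - {i..i + t - 1}}"

definition faces :: "nat set set \<Rightarrow> int \<Rightarrow> nat set set" where
  "faces K p = {F \<in> K. int (card F) = p + 1}"

definition chains :: "'k::field itself \<Rightarrow> nat set set \<Rightarrow> int \<Rightarrow> (nat set \<Rightarrow> 'k) set" where
  "chains T K p = {c. \<forall>F. c F \<noteq> 0 \<longrightarrow> F \<in> faces K p}"

text \<open>Simplicial boundary (including the augmentation in degree 0):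
removing vertex v from a face G \<union> {v} carries sign (-1)^(number of vertices of G below v).\<close>
definition bd :: "nat set set \<Rightarrow> (nat set \<Rightarrow> 'k::field) \<Rightarrow> nat set \<Rightarrow> 'k" where
  "bd K c G = (if G \<in> K then
      (\<Sum>v\<in>(\<Union>K) - G. if insert v G \<in> K then (-1) ^ card {u \<in> G. u < v} * c (insert v G) else 0)
    else 0)"

definition fscale :: "'k::field \<Rightarrow> (nat set \<Rightarrow> 'k) \<Rightarrow> nat set \<Rightarrow> 'k" where
  "fscale a f = (\<lambda>x. a * f x)"

text \<open>Dimension over 'k of the reduced homology
  H_p(K;'k) = ker(bd_p) / im(bd_(p+1)).\<close>
definition rhdim :: "'k::field itself \<Rightarrow> nat set set \<Rightarrow> int \<Rightarrow> nat" where
  "rhdim T K p =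
     vector_space.dim (fscale :: 'k \<Rightarrow> _) {c \<in> chains T K p. bd K c = 0}
     - vector_space.dim (fscale :: 'k \<Rightarrow> _) (bd K ` chains T K (p + 1))"

end

theory Submission
  imports Defs
begin



lemma fscale_vs: "vector_space (fscale :: 'a::field \<Rightarrow> (nat set \<Rightarrow> 'a) \<Rightarrow> _)"
  by unfold_locales (auto simp: fscale_def algebra_simps fun_eq_iff)

interpretation VS: vector_space "fscale :: 'a::field \<Rightarrow> (nat set \<Rightarrow> 'a) \<Rightarrow> _"
  by (rule fscale_vs)

lemma RN:
  fixes f :: "(nat set \<Rightarrow> 'a::field) \<Rightarrow> (nat set \<Rightarrow> 'a)"
  assumes lin: "Vector_Spaces.linear fscale fscale f" and sub: "VS.subspace S"
    and fin: "finite T" "S \<subseteq> VS.span T"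
  shows "VS.dim S = VS.dim {x\<in>S. f x = 0} + VS.dim (f ` S)"
proof -
  interpret L: linear "fscale::'a\<Rightarrow>_" fscale f by (rule lin)
  define N where "N = {x\<in>S. f x = 0}"
  have NS: "N \<subseteq> S" by (auto simp: N_def)
  have subN: "VS.subspace N"
    unfolding N_def using sub
    by (auto simp: VS.subspace_def L.add L.scale)
  obtain BN where BN: "BN \<subseteq> N" "VS.independent BN" "N \<subseteq> VS.span BN"
    using VS.maximal_independent_subset by blast
  obtain B where B: "BN \<subseteq> B" "B \<subseteq> S" "VS.independent B" "S \<subseteq> VS.span B"
    using VS.maximal_independent_subset_extend[of BN S] BN NS by blast
  have finB: "finite B" using VS.independent_span_bound[OF fin(1) B(3)] B(2) fin(2) by blast
  have finBN: "finite BN" using B(1) finB finite_subset by blast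
  have dS: "VS.dim S = card B" using VS.basis_card_eq_dim[OF B(2) B(4) B(3)] by simp
  have dN: "VS.dim N = card BN" using VS.basis_card_eq_dim[OF BN(1) BN(3) BN(2)] by simp
  have fS_span: "f ` S \<subseteq> VS.span (f ` (B - BN))"
  proof
    fix y assume "y \<in> f ` S"
    then obtain x where x: "x \<in> S" "y = f x" by auto
    have "x \<in> VS.span B" using x B(4) by auto
    then have "f x \<in> VS.span (f ` B)"
      using L.span_image by blast
    moreover have "f ` B \<subseteq> insert 0 (f ` (B - BN))"
      using BN(1) by (auto simp: N_def)
    ultimately have "f x \<in> VS.span (insert 0 (f ` (B - BN)))"
      using VS.span_mono by blast
    then show "y \<in> VS.span (f ` (B - BN))" using x by simp
  qed
  have le1: "VS.dim (f ` S) \<le> card B - card BN"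
  proof -
    have "VS.dim (f ` S) \<le> card (f ` (B - BN))"
      using VS.dim_le_card[OF fS_span] finB by simp
    also have "\<dots> \<le> card (B - BN)" using finB card_image_le by blast
    also have "\<dots> = card B - card BN" using finB B(1) card_Diff_subset finBN by blast
    finally show ?thesis .
  qed
  have finfS: "f ` S \<subseteq> VS.span (f ` T)"
    using fin(2) L.span_image by blast
  obtain C where C: "C \<subseteq> f ` S" "VS.independent C" "f ` S \<subseteq> VS.span C"
    using VS.maximal_independent_subset by blast
  have finC: "finite C" using VS.independent_span_bound[of "f ` T" C] fin(1) C finfS by blast
  have dC: "VS.dim (f ` S) = card C" using VS.basis_card_eq_dim[OF C(1) C(3) C(2)] by simp
  have "\<forall>c\<in>C. \<exists>x. x \<in> S \<and> f x = c" using C(1) by blast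
  then obtain g where g0: "\<forall>c\<in>C. g c \<in> S \<and> f (g c) = c" by metis
  have g: "\<And>c. c \<in> C \<Longrightarrow> g c \<in> S \<and> f (g c) = c" using g0 by blast
  have gC: "g ` C \<subseteq> S" using g by auto
  have fgC: "f ` (g ` C) = C" using g by force
  have "S \<subseteq> VS.span (BN \<union> g ` C)"
  proof
    fix x assume x: "x \<in> S"
    have "f x \<in> VS.span C" using x C(3) by auto
    then have "f x \<in> f ` VS.span (g ` C)" using L.span_image fgC by metis
    then obtain y where y: "y \<in> VS.span (g ` C)" "f x = f y" by auto
    have yS: "y \<in> S" using y(1) VS.span_minimal[OF gC sub] by auto
    have "x - y \<in> N" using x yS y(2) sub by (auto simp: N_def VS.subspace_diff L.diff)
    then have "x - y \<in> VS.span (BN \<union> g ` C)" using BN(3) VS.span_mono[of BN] by blast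
    moreover have "y \<in> VS.span (BN \<union> g ` C)" using y(1) VS.span_mono[of "g ` C"] by blast
    ultimately have "(x - y) + y \<in> VS.span (BN \<union> g ` C)" using VS.span_add by blast
    then show "x \<in> VS.span (BN \<union> g ` C)" by simp
  qed
  then have "VS.dim S \<le> card (BN \<union> g ` C)" using VS.dim_le_card finBN finC by blast
  also have "\<dots> \<le> card BN + card (g ` C)" by (rule card_Un_le)
  also have "\<dots> \<le> card BN + card C" using card_image_le finC by auto
  finally have "VS.dim S \<le> VS.dim N + VS.dim (f ` S)" using dN dC by simp
  then have "VS.dim S = VS.dim N + VS.dim (f ` S)"
    using le1 dS dN card_mono[OF finB B(1)] by linarith
  then show ?thesis by (simp add: N_def)
qed




locale splitcx =
  fixes C :: "int \<Rightarrow> (nat set \<Rightarrow> 'a::field) set" and d P :: "(nat set \<Rightarrow> 'a) \<Rightarrow> (nat set \<Rightarrow> 'a)"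
  assumes subC: "\<And>p. VS.subspace (C p)"
    and finC: "\<And>p. \<exists>T. finite T \<and> C p \<subseteq> VS.span T"
    and lind: "Vector_Spaces.linear fscale fscale d"
    and linP: "Vector_Spaces.linear fscale fscale P"
    and dC: "\<And>p x. x \<in> C (p+1) \<Longrightarrow> d x \<in> C p"
    and dd: "\<And>p x. x \<in> C (p+1) \<Longrightarrow> d (d x) = 0"
    and PC: "\<And>p x. x \<in> C p \<Longrightarrow> P x \<in> C p"
    and PP: "\<And>p x. x \<in> C p \<Longrightarrow> P (P x) = P x"
    and PdD: "\<And>p x. x \<in> C (p+1) \<Longrightarrow> P x = 0 \<Longrightarrow> P (d x) = 0"
begin

definition "D p = {x \<in> C p. P x = 0}"
definition "E p = {x \<in> C p. P x = x}"

definition "hC p = VS.dim {x \<in> C p. d x = 0} - VS.dim (d ` C (p+1))"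
definition "hD p = VS.dim {x \<in> D p. d x = 0} - VS.dim (d ` D (p+1))"
definition "hE p = VS.dim {x \<in> E p. P (d x) = 0} - VS.dim ((\<lambda>x. P (d x)) ` E (p+1))"

lemma PdP: assumes "x \<in> C (p+1)" shows "P (d (P x)) = P (d x)"
proof -
  interpret Ld: linear "fscale::'a\<Rightarrow>_" fscale d by (rule lind)
  interpret LP: linear "fscale::'a\<Rightarrow>_" fscale P by (rule linP)
  have "x - P x \<in> C (p+1)" using assms PC subC VS.subspace_diff by blast
  moreover have "P (x - P x) = 0" using PP[OF assms] by (simp add: LP.diff)
  ultimately have "P (d (x - P x)) = 0" using PdD by blast
  then show ?thesis by (simp add: Ld.diff LP.diff)
qed

lemma subZ: "VS.subspace {x \<in> C p. d x = 0}"
proof -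
  interpret Ld: linear "fscale::'a\<Rightarrow>_" fscale d by (rule lind)
  show ?thesis using subC[of p] by (auto simp: VS.subspace_def Ld.add Ld.scale)
qed

lemma subB: "VS.subspace (d ` C (p+1))"
  using module_hom.subspace_image[OF lind[unfolded module_hom_iff_linear[symmetric]] subC] .

lemma finZ: "\<exists>T. finite T \<and> {x \<in> C p. d x = 0} \<subseteq> VS.span T"
  using finC[of p] by blast

lemma finB: "\<exists>T. finite T \<and> d ` C (p+1) \<subseteq> VS.span T"
  using finC[of p] dC by blast

lemma RNZ: "VS.dim {x \<in> C p. d x = 0} = VS.dim {x \<in> D p. d x = 0} + VS.dim (P ` {x \<in> C p. d x = 0})"
proof -
  obtain T where "finite T" "{x \<in> C p. d x = 0} \<subseteq> VS.span T" using finZ by blast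
  from RN[OF linP subZ this] show ?thesis
    by (simp add: D_def conj_commute conj_left_commute)
qed

lemma RNB: "VS.dim (d ` C (p+1)) = VS.dim {x \<in> d ` C (p+1). P x = 0} + VS.dim (P ` d ` C (p+1))"
proof -
  obtain T where "finite T" "d ` C (p+1) \<subseteq> VS.span T" using finB by blast
  from RN[OF linP subB this] show ?thesis .
qed

lemma PB: "P ` d ` C (p+1) = (\<lambda>x. P (d x)) ` E (p+1)"
proof
  show "P ` d ` C (p + 1) \<subseteq> (\<lambda>x. P (d x)) ` E (p + 1)"
  proof
    fix y assume "y \<in> P ` d ` C (p + 1)"
    then obtain x where x: "x \<in> C (p+1)" "y = P (d x)" by auto
    have "P x \<in> E (p+1)" using x PC PP by (simp add: E_def)
    moreover have "y = P (d (P x))" using PdP[of x] x by (simp add: add.commute)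
    ultimately show "y \<in> (\<lambda>x. P (d x)) ` E (p + 1)" by blast
  qed
  show "(\<lambda>x. P (d x)) ` E (p + 1) \<subseteq> P ` d ` C (p + 1)"
    by (auto simp: E_def)
qed

lemma PZsub: "P ` {x \<in> C p. d x = 0} \<subseteq> {x \<in> E p. P (d x) = 0}"
proof
  interpret LP: linear "fscale::'a\<Rightarrow>_" fscale P by (rule linP)
  fix y assume "y \<in> P ` {x \<in> C p. d x = 0}"
  then obtain x where x: "x \<in> C p" "d x = 0" "y = P x" by auto
  have "P (d (P x)) = P (d x)" using PdP[of x "p - 1"] x by simp
  then show "y \<in> {x \<in> E p. P (d x) = 0}" using x PC PP by (simp add: E_def)
qed

lemma BEZE: "(\<lambda>x. P (d x)) ` E (p+1) \<subseteq> {x \<in> E p. P (d x) = 0}"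
proof
  interpret LP: linear "fscale::'a\<Rightarrow>_" fscale P by (rule linP)
  fix y assume "y \<in> (\<lambda>x. P (d x)) ` E (p+1)"
  then obtain x where x: "x \<in> C (p+1)" "y = P (d x)" by (auto simp: E_def)
  have dx: "d x \<in> C p" using dC x by blast
  have "P (d (P (d x))) = P (d (d x))" using PdP[of "d x" "p - 1"] dx by simp
  also have "\<dots> = 0" using dd x by simp
  finally show "y \<in> {x \<in> E p. P (d x) = 0}" using x dx PC PP by (simp add: E_def)
qed

theorem split_b:
  assumes acD: "\<And>p z. z \<in> D p \<Longrightarrow> d z = 0 \<Longrightarrow> z \<in> d ` D (p+1)"
  shows "hC p = hE p"
proof -
  interpret Ld: linear "fscale::'a\<Rightarrow>_" fscale d by (rule lind)
  interpret LP: linear "fscale::'a\<Rightarrow>_" fscale P by (rule linP)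
  have Z: "P ` {x \<in> C p. d x = 0} = {x \<in> E p. P (d x) = 0}"
  proof
    show "{x \<in> E p. P (d x) = 0} \<subseteq> P ` {x \<in> C p. d x = 0}"
    proof
      fix e assume e: "e \<in> {x \<in> E p. P (d x) = 0}"
      then have eC: "e \<in> C p" and Pe: "P e = e" and Pde: "P (d e) = 0" by (auto simp: E_def)
      have eC': "e \<in> C ((p - 1) + 1)" using eC by simp
      have "d e \<in> D (p - 1)" using dC[OF eC'] Pde by (simp add: D_def)
      moreover have "d (d e) = 0" using dd[OF eC'] .
      ultimately have "d e \<in> d ` D (p - 1 + 1)" using acD by blast
      then obtain y where y: "y \<in> D p" "d e = d y" by auto
      have "e - y \<in> C p" using eC y(1) subC VS.subspace_diff by (auto simp: D_def)
      moreover have "d (e - y) = 0" using y by (simp add: Ld.diff)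
      moreover have "P (e - y) = e" using Pe y(1) by (simp add: LP.diff D_def)
      ultimately show "e \<in> P ` {x \<in> C p. d x = 0}" by (metis (mono_tags, lifting) image_eqI mem_Collect_eq)
    qed
  qed (rule PZsub)
  have K: "{x \<in> d ` C (p+1). P x = 0} = {x \<in> D p. d x = 0}"
  proof
    show "{x \<in> d ` C (p+1). P x = 0} \<subseteq> {x \<in> D p. d x = 0}"
      using dC dd by (auto simp: D_def)
    show "{x \<in> D p. d x = 0} \<subseteq> {x \<in> d ` C (p+1). P x = 0}"
    proof
      fix z assume z: "z \<in> {x \<in> D p. d x = 0}"
      then have "z \<in> d ` D (p+1)" using acD by blast
      then show "z \<in> {x \<in> d ` C (p+1). P x = 0}" using z by (auto simp: D_def)
    qed
  qed
  show ?thesis unfolding hC_def hE_def using RNZ[of p] RNB[of p] Z K PB[of p] by simp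
qed

theorem split_a:
  assumes acE: "\<And>p z. z \<in> E p \<Longrightarrow> P (d z) = 0 \<Longrightarrow> z \<in> (\<lambda>x. P (d x)) ` E (p+1)"
  shows "hC p = hD p"
proof -
  interpret Ld: linear "fscale::'a\<Rightarrow>_" fscale d by (rule lind)
  interpret LP: linear "fscale::'a\<Rightarrow>_" fscale P by (rule linP)
  have ZE: "{x \<in> E p. P (d x) = 0} = (\<lambda>x. P (d x)) ` E (p+1)"
    using acE BEZE by blast
  have Z: "P ` {x \<in> C p. d x = 0} = {x \<in> E p. P (d x) = 0}"
  proof
    show "{x \<in> E p. P (d x) = 0} \<subseteq> P ` {x \<in> C p. d x = 0}"
    proof
      fix e assume e: "e \<in> {x \<in> E p. P (d x) = 0}"
      then obtain w where w: "w \<in> E (p+1)" "e = P (d w)" using acE by blast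
      have wC: "w \<in> C (p+1)" using w by (simp add: E_def)
      have "d w \<in> C p" "d (d w) = 0" using dC[OF wC] dd[OF wC] by auto
      then show "e \<in> P ` {x \<in> C p. d x = 0}" using w(2) by blast
    qed
  qed (rule PZsub)
  have K: "{x \<in> d ` C (p+1). P x = 0} = d ` D (p+1)"
  proof
    show "d ` D (p+1) \<subseteq> {x \<in> d ` C (p+1). P x = 0}"
      using PdD by (auto simp: D_def)
    show "{x \<in> d ` C (p+1). P x = 0} \<subseteq> d ` D (p+1)"
    proof
      fix x assume "x \<in> {x \<in> d ` C (p+1). P x = 0}"
      then obtain y where y: "y \<in> C (p+1)" "x = d y" "P (d y) = 0" by auto
      have "P (d (P y)) = 0" using PdP[of y p] y by simp
      moreover have "P y \<in> E (p+1)" using y PC PP by (simp add: E_def)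
      ultimately obtain w where w: "w \<in> E (p+1+1)" "P y = P (d w)" using acE by blast
      have wC: "w \<in> C (p+1+1)" using w by (simp add: E_def)
      have "y - d w \<in> C (p+1)" using y(1) dC[OF wC] subC VS.subspace_diff by blast
      moreover have "P (y - d w) = 0" using w by (simp add: LP.diff)
      moreover have "d (y - d w) = x" using y dd[OF wC] by (simp add: Ld.diff)
      ultimately show "x \<in> d ` D (p+1)" unfolding D_def by blast
    qed
  qed
  show ?thesis unfolding hC_def hD_def using RNZ[of p] RNB[of p] Z K PB[of p] ZE by simp
qed

end



definition cpx :: "nat set set \<Rightarrow> bool" where
  "cpx K \<longleftrightarrow> finite K \<and> (\<forall>F\<in>K. finite F) \<and> (\<forall>F\<in>K. \<forall>G. G \<subseteq> F \<longrightarrow> G \<in> K)"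

definition sg :: "nat set \<Rightarrow> nat \<Rightarrow> 'a::field" where
  "sg G w = (-1) ^ card {u \<in> G. u < w}"

definition acyc :: "'a::field itself \<Rightarrow> nat set set \<Rightarrow> bool" where
  "acyc T K \<longleftrightarrow> (\<forall>p z. z \<in> chains T K p \<and> bd K z = 0 \<longrightarrow> z \<in> bd K ` chains T K (p+1))"

lemma sum_fun_app: "(sum f A) x = (\<Sum>a\<in>A. f a x)"
  by (induction A rule: infinite_finite_induct) auto

lemma sg_sq: "sg G w * sg G w = (1::'a::field)"
  by (simp add: sg_def power_mult_distrib[symmetric])

lemma sg_nz: "sg G w \<noteq> (0::'a::field)"
  by (simp add: sg_def)

lemma sg_insert: assumes "finite G" "x \<notin> G"
  shows "sg (insert x G) w = (if x < w then - sg G w else (sg G w :: 'a::field))"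
proof -
  have "{u \<in> insert x G. u < w} = (if x < w then insert x {u \<in> G. u < w} else {u \<in> G. u < w})"
    by auto
  then show ?thesis using assms by (simp add: sg_def)
qed

lemma bd_sg: fixes c :: "nat set \<Rightarrow> 'a::field" shows "bd K c G = (if G \<in> K then (\<Sum>v\<in>\<Union>K - G. if insert v G \<in> K then sg G v * c (insert v G) else 0) else 0)"
  unfolding bd_def sg_def by simp

lemma bd_alt:
  fixes c :: "nat set \<Rightarrow> 'a::field"
  assumes "finite U" "\<Union>K \<subseteq> U"
  shows "bd K c G = (if G \<in> K then (\<Sum>v\<in>U - G. if insert v G \<in> K then sg G v * c (insert v G) else 0) else 0)"
  unfolding bd_sg
  by (rule if_cong[OF refl _ refl], rule sum.mono_neutral_left) (use assms in auto)

lemma bd_add: "bd K (x + y) = bd K x + bd K y"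
  by (auto simp: fun_eq_iff bd_def sum.distrib[symmetric] distrib_left intro!: sum.cong)

lemma bd_scale: "bd K (fscale a x) = fscale a (bd K x)"
  by (auto simp: fun_eq_iff bd_def fscale_def sum_distrib_left intro!: sum.cong)

lemma bd_linear: "Vector_Spaces.linear fscale fscale (bd K :: (nat set \<Rightarrow> 'a::field) \<Rightarrow> _)"
  unfolding Vector_Spaces.linear_iff using fscale_vs bd_add bd_scale by blast

lemma chains_sub: "VS.subspace (chains T K p)"
  unfolding VS.subspace_def chains_def fscale_def
  by (auto, metis add.left_neutral)

definition delta :: "nat set \<Rightarrow> nat set \<Rightarrow> 'a::field" where
  "delta F = (\<lambda>G. if G = F then 1 else 0)"

lemma chains_fin:
  assumes "finite K"
  shows "\<exists>T. finite T \<and> chains (TYPE('a::field)) K p \<subseteq> VS.span T"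
proof (intro exI conjI)
  let ?T = "delta ` faces K p :: (nat set \<Rightarrow> 'a) set"
  have fin: "finite (faces K p)" using assms by (simp add: faces_def)
  show "finite ?T" using fin by simp
  show "chains TYPE('a) K p \<subseteq> VS.span ?T"
  proof
    fix c assume c: "c \<in> chains TYPE('a) K p"
    have eq: "c = (\<Sum>F\<in>faces K p. fscale (c F) (delta F))"
    proof
      fix G
      have "(\<Sum>F\<in>faces K p. fscale (c F) (delta F)) G = (\<Sum>F\<in>faces K p. if G = F then c F else 0)"
        unfolding sum_fun_app fscale_def delta_def by (rule sum.cong) auto
      also have "\<dots> = (if G \<in> faces K p then c G else 0)"
        using fin by simp
      also have "\<dots> = c G" using c by (auto simp: chains_def)
      finally show "c G = (\<Sum>F\<in>faces K p. fscale (c F) (delta F)) G" by simp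
    qed
    have "(\<Sum>F\<in>faces K p. fscale (c F) (delta F)) \<in> VS.span ?T"
      by (intro VS.span_sum VS.span_scale VS.span_base) auto
    then show "c \<in> VS.span ?T" by (simp only: eq[symmetric])
  qed
qed

lemma bd_supp: "bd K c G \<noteq> 0 \<Longrightarrow> G \<in> K"
  by (auto simp: bd_def split: if_splits)

lemma bd_chains:
  assumes "cpx K" "c \<in> chains T K (p+1)"
  shows "bd K c \<in> chains T K p"
  unfolding chains_def
proof (intro CollectI allI impI)
  fix G assume nz: "bd K c G \<noteq> 0"
  then have GK: "G \<in> K" by (rule bd_supp)
  from nz GK have "(\<Sum>v\<in>\<Union>K - G. if insert v G \<in> K then (-1) ^ card {u \<in> G. u < v} * c (insert v G) else 0) \<noteq> 0"
    unfolding bd_def by (simp only: GK if_True not_False_eq_True)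
  then obtain v where v0: "v \<in> \<Union>K - G" "(if insert v G \<in> K then (-1) ^ card {u \<in> G. u < v} * c (insert v G) else 0) \<noteq> 0"
    by (rule sum.not_neutral_contains_not_neutral)
  then have v: "v \<in> \<Union>K - G" "insert v G \<in> K" "c (insert v G) \<noteq> 0"
    by (auto split: if_splits)
  have "insert v G \<in> faces K (p+1)" using v assms(2) by (auto simp: chains_def)
  moreover have "finite G" using GK assms(1) by (auto simp: cpx_def)
  ultimately show "G \<in> faces K p" using GK v(1) by (auto simp: faces_def)
qed




lemma antisym_sum:
  fixes g :: "nat \<Rightarrow> nat \<Rightarrow> 'a::ab_group_add"
  assumes fin: "finite A" and anti: "\<And>w x. w \<in> A \<Longrightarrow> x \<in> A \<Longrightarrow> w \<noteq> x \<Longrightarrow> g w x = - g x w"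
  shows "(\<Sum>w\<in>A. \<Sum>x\<in>A - {w}. g w x) = 0"
proof -
  define Q1 where "Q1 = {p \<in> A \<times> A. fst p < snd p}"
  define Q2 where "Q2 = {p \<in> A \<times> A. snd p < fst p}"
  define h where "h p = g (fst p) (snd p)" for p
  have fQ1: "finite Q1" using fin unfolding Q1_def by (auto intro: finite_subset[of _ "A \<times> A"])
  have fQ2: "finite Q2" using fin unfolding Q2_def by (auto intro: finite_subset[of _ "A \<times> A"])
  have e1: "(\<Sum>w\<in>A. \<Sum>x\<in>A - {w}. g w x) = (\<Sum>(w,x)\<in>Sigma A (\<lambda>w. A - {w}). g w x)"
    using fin by (simp add: sum.Sigma)
  have e2: "(\<Sum>(w,x)\<in>Sigma A (\<lambda>w. A - {w}). g w x) = sum h (Sigma A (\<lambda>w. A - {w}))"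
    by (rule sum.cong) (auto simp: h_def)
  have e3: "Sigma A (\<lambda>w. A - {w}) = Q1 \<union> Q2"
    unfolding Q1_def Q2_def by auto
  have e4: "sum h (Q1 \<union> Q2) = sum h Q1 + sum h Q2"
    using fQ1 fQ2 by (intro sum.union_disjoint) (auto simp: Q1_def Q2_def)
  have e5: "Q2 = prod.swap ` Q1"
  proof (rule set_eqI)
    fix p :: "nat \<times> nat"
    show "p \<in> Q2 \<longleftrightarrow> p \<in> prod.swap ` Q1"
    proof
      assume "p \<in> Q2" then have "prod.swap p \<in> Q1" "p = prod.swap (prod.swap p)"
        by (auto simp: Q1_def Q2_def)
      then show "p \<in> prod.swap ` Q1" by blast
    next
      assume "p \<in> prod.swap ` Q1" then show "p \<in> Q2" by (auto simp: Q1_def Q2_def)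
    qed
  qed
  have e6: "sum h (prod.swap ` Q1) = (\<Sum>p\<in>Q1. h (prod.swap p))"
    by (subst sum.reindex) (auto simp: comp_def)
  have e7: "sum h Q1 + (\<Sum>p\<in>Q1. h (prod.swap p)) = (\<Sum>p\<in>Q1. h p + h (prod.swap p))"
    by (simp add: sum.distrib)
  have e8: "(\<Sum>p\<in>Q1. h p + h (prod.swap p)) = 0"
  proof (rule sum.neutral, rule ballI)
    fix p assume "p \<in> Q1"
    then obtain w x where p: "p = (w, x)" "w \<in> A" "x \<in> A" "w < x"
      unfolding Q1_def by (cases p) auto
    have "g w x = - g x w" using anti[OF p(2,3)] p(4) by simp
    then show "h p + h (prod.swap p) = 0" by (simp add: p h_def)
  qed
  show ?thesis using e1 e2 e3 e4 e5 e6 e7 e8 by simp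
qed
lemma cpx_fin: "cpx K \<Longrightarrow> finite (\<Union>K)"
  by (auto simp: cpx_def)

lemma bdbd:
  fixes c :: "nat set \<Rightarrow> 'a::field"
  assumes K: "cpx K"
  shows "bd K (bd K c) = 0"
proof
  fix H
  let ?U = "\<Union>K"
  have fU: "finite ?U" using cpx_fin[OF K] .
  show "bd K (bd K c) H = 0 H"
  proof (cases "H \<in> K")
    case False then show ?thesis by (simp add: bd_def)
  next
    case HK: True
    have fH: "finite H" using HK K by (auto simp: cpx_def)
    define g where "g w x = (if insert x (insert w H) \<in> K then sg H w * sg (insert w H) x * c (insert x (insert w H)) else (0::'a))" for w x
    have inner: "(if insert w H \<in> K then sg H w * bd K c (insert w H) else 0) = (\<Sum>x\<in>(?U - H) - {w}. g w x)"
      if w: "w \<in> ?U - H" for w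
    proof (cases "insert w H \<in> K")
      case True
      have eqs: "?U - insert w H = (?U - H) - {w}" by auto
      have "bd K c (insert w H) = (\<Sum>x\<in>?U - insert w H. if insert x (insert w H) \<in> K then sg (insert w H) x * c (insert x (insert w H)) else 0)"
        using True by (simp only: bd_sg if_True)
      then have "sg H w * bd K c (insert w H) = (\<Sum>x\<in>(?U - H) - {w}. sg H w * (if insert x (insert w H) \<in> K then sg (insert w H) x * c (insert x (insert w H)) else 0))"
        by (simp only: eqs sum_distrib_left)
      also have "\<dots> = (\<Sum>x\<in>(?U - H) - {w}. g w x)"
        by (rule sum.cong) (auto simp: g_def mult.assoc)
      finally show ?thesis using True by simp
    next
      case False
      have "g w x = 0" for x
      proof -
        have "insert x (insert w H) \<notin> K"
          using False K unfolding cpx_def by blast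
        then show ?thesis by (simp add: g_def)
      qed
      then show ?thesis using False by simp
    qed
    have "bd K (bd K c) H = (\<Sum>w\<in>?U - H. if insert w H \<in> K then sg H w * bd K c (insert w H) else 0)"
      using HK by (simp only: bd_sg if_True)
    also have "\<dots> = (\<Sum>w\<in>?U - H. \<Sum>x\<in>(?U - H) - {w}. g w x)"
      by (rule sum.cong) (use inner in auto)
    also have "\<dots> = 0"
    proof (rule antisym_sum)
      show "finite (?U - H)" using fU by simp
      fix w x assume w: "w \<in> ?U - H" and x: "x \<in> ?U - H" and wx: "w \<noteq> x"
      have ins: "insert x (insert w H) = insert w (insert x H)" by auto
      have s1: "sg (insert w H) x = (if w < x then - sg H x else (sg H x :: 'a))"
        using sg_insert[OF fH, of w x] w by simp
      have s2: "sg (insert x H) w = (if x < w then - sg H w else (sg H w :: 'a))"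
        using sg_insert[OF fH, of x w] x by simp
      show "g w x = - g x w"
        unfolding g_def ins using wx s1 s2 by (auto simp: algebra_simps)
    qed
    finally show ?thesis by simp
  qed
qed




lemma bd_single:
  fixes e :: "nat set \<Rightarrow> 'a::field"
  assumes "\<And>F. a \<notin> F \<Longrightarrow> e F = 0" "G \<in> K" "a \<notin> G" "insert a G \<in> K" and K: "cpx K"
  shows "bd K e G = sg G a * e (insert a G)"
proof -
  have fU: "finite (\<Union>K - G)" using cpx_fin[OF K] by simp
  have aU: "a \<in> \<Union>K - G" using assms(3,4) by blast
  have "bd K e G = (\<Sum>v\<in>\<Union>K - G. if insert v G \<in> K then sg G v * e (insert v G) else 0)"
    using assms(2) by (simp only: bd_sg if_True)
  also have "\<dots> = (\<Sum>v\<in>\<Union>K - G. if v = a then sg G a * e (insert a G) else 0)"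
  proof (rule sum.cong[OF refl])
    fix v assume "v \<in> \<Union>K - G"
    show "(if insert v G \<in> K then sg G v * e (insert v G) else 0) = (if v = a then sg G a * e (insert a G) else 0)"
    proof (cases "v = a")
      case True then show ?thesis using assms(4) by simp
    next
      case False
      then have "a \<notin> insert v G" using assms(3) by simp
      then show ?thesis using False assms(1) by simp
    qed
  qed
  also have "\<dots> = sg G a * e (insert a G)"
    using aU fU by (simp add: sum.delta)
  finally show ?thesis .
qed

lemma bd_diff: "bd K (x - y) = bd K x - bd K (y :: nat set \<Rightarrow> 'a::field)"
  by (rule module_hom.diff[OF bd_linear[unfolded module_hom_iff_linear[symmetric]]])

lemma cpx_card: "cpx K \<Longrightarrow> F \<in> K \<Longrightarrow> a \<in> F \<Longrightarrow> card F = card (F - {a}) + 1"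
  unfolding cpx_def by (metis card_Suc_Diff1 Suc_eq_plus1)

lemma cone_acyc:
  assumes K: "cpx K" and cone: "\<And>F. F \<in> K \<Longrightarrow> insert a F \<in> K"
  shows "acyc TYPE('a::field) K"
  unfolding acyc_def
proof (intro allI impI, elim conjE)
  fix p and z :: "nat set \<Rightarrow> 'a"
  assume zC: "z \<in> chains TYPE('a) K p" and bz: "bd K z = 0"
  define x where "x F = (if a \<in> F \<and> F \<in> K then sg (F - {a}) a * z (F - {a}) else 0)" for F
  have xC: "x \<in> chains TYPE('a) K (p+1)"
    unfolding chains_def
  proof (intro CollectI allI impI)
    fix F assume "x F \<noteq> 0"
    then have F: "a \<in> F" "F \<in> K" "z (F - {a}) \<noteq> 0" by (auto simp: x_def split: if_splits)
    then have "F - {a} \<in> faces K p" using zC by (auto simp: chains_def)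
    then show "F \<in> faces K (p+1)" using cpx_card[OF K F(2) F(1)] F(2) by (auto simp: faces_def)
  qed
  have x0: "\<And>F. a \<notin> F \<Longrightarrow> x F = 0" by (simp add: x_def)
  have bdx: "bd K x G = z G" if "G \<in> K" "a \<notin> G" for G
  proof -
    have "bd K x G = sg G a * x (insert a G)"
      by (rule bd_single[OF x0 that cone[OF that(1)] K])
    also have "\<dots> = sg G a * sg G a * z G"
      using that cone[OF that(1)] by (simp add: x_def)
    finally show ?thesis by (simp add: sg_sq)
  qed
  define w where "w = z - bd K x"
  have zF0: "z F = 0" if "F \<notin> K" for F using zC that by (auto simp: chains_def faces_def)
  have w0: "w F = 0" if "a \<notin> F" for F
  proof (cases "F \<in> K")
    case True then show ?thesis using bdx[OF True that] by (simp add: w_def)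
  next
    case False then show ?thesis using zF0[OF False] bd_supp[of K x F] by (auto simp: w_def)
  qed
  have bw: "bd K w = 0"
    using bz bdbd[OF K, of x] by (simp add: w_def bd_diff)
  have "w = 0"
  proof
    fix F show "w F = 0 F"
    proof (cases "a \<in> F \<and> F \<in> K")
      case True
      have GK: "F - {a} \<in> K" using True K by (auto simp: cpx_def)
      have ins: "insert a (F - {a}) = F" using True by auto
      have "bd K w (F - {a}) = sg (F - {a}) a * w F"
        using bd_single[OF w0 GK _ _ K] ins True by simp
      then have "sg (F - {a}) a * w F = 0" using bw by simp
      then show ?thesis by (simp add: sg_nz)
    next
      case False
      then show ?thesis
      proof (cases "a \<in> F")
        case True
        then have "F \<notin> K" using False by simp
        then show ?thesis using zF0 bd_supp[of K x F] by (auto simp: w_def)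
      qed (simp add: w0)
    qed
  qed
  then have "z = bd K x" by (simp add: w_def)
  then show "z \<in> bd K ` chains TYPE('a) K (p+1)" using xC by blast
qed

lemma acyc_rhdim:
  assumes "acyc TYPE('a::field) K" "cpx K"
  shows "rhdim TYPE('a) K p = 0"
proof -
  have "{c \<in> chains TYPE('a) K p. bd K c = 0} = bd K ` chains TYPE('a) K (p+1)"
  proof
    show "{c \<in> chains TYPE('a) K p. bd K c = 0} \<subseteq> bd K ` chains TYPE('a) K (p+1)"
      using assms(1) unfolding acyc_def by blast
    show "bd K ` chains TYPE('a) K (p+1) \<subseteq> {c \<in> chains TYPE('a) K p. bd K c = 0}"
      using bd_chains[OF assms(2)] bdbd[OF assms(2)] by blast
  qed
  then show ?thesis unfolding rhdim_def by simp
qed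

lemma cpx_empty: "cpx {}" by (simp add: cpx_def)

lemma acyc_empty: "acyc TYPE('a::field) {}"
  unfolding acyc_def chains_def faces_def
proof (intro allI impI)
  fix p and z :: "nat set \<Rightarrow> 'a"
  assume "z \<in> {c. \<forall>F. c F \<noteq> 0 \<longrightarrow> F \<in> {F \<in> {}. int (card F) = p + 1}} \<and> bd {} z = 0"
  then have "z = 0" by auto
  moreover have "bd {} (0::nat set \<Rightarrow> 'a) = 0" by (simp add: bd_def fun_eq_iff)
  ultimately show "z \<in> bd {} ` {c. \<forall>F. c F \<noteq> 0 \<longrightarrow> F \<in> {F \<in> {}. int (card F) = p + 1 + 1}}"
    by (intro image_eqI[where x=0]) auto
qed

lemma rhdim_empty: "rhdim TYPE('a::field) {} p = 0"
  by (rule acyc_rhdim[OF acyc_empty cpx_empty])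




definition del :: "nat set set \<Rightarrow> nat \<Rightarrow> nat set set" where
  "del K v = {F \<in> K. v \<notin> F}"
definition lk :: "nat set set \<Rightarrow> nat \<Rightarrow> nat set set" where
  "lk K v = {G. v \<notin> G \<and> insert v G \<in> K}"
definition prj :: "nat \<Rightarrow> (nat set \<Rightarrow> 'a::field) \<Rightarrow> nat set \<Rightarrow> 'a" where
  "prj v c = (\<lambda>F. if v \<in> F then c F else 0)"
definition phi :: "nat set set \<Rightarrow> nat \<Rightarrow> (nat set \<Rightarrow> 'a::field) \<Rightarrow> nat set \<Rightarrow> 'a" where
  "phi K v c = (\<lambda>F. if v \<in> F \<and> F \<in> K then sg (F - {v}) v * c (F - {v}) else 0)"

lemma cpx_del: "cpx K \<Longrightarrow> cpx (del K v)"
  by (auto simp: cpx_def del_def)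

lemma cpx_lk: assumes "cpx K" shows "cpx (lk K v)"
proof -
  have "lk K v \<subseteq> (\<lambda>F. F - {v}) ` K"
  proof
    fix G assume "G \<in> lk K v"
    then have G: "v \<notin> G" "insert v G \<in> K" by (auto simp: lk_def)
    then have "G = insert v G - {v}" by simp
    then show "G \<in> (\<lambda>F. F - {v}) ` K" using G(2) by (rule image_eqI)
  qed
  then have "finite (lk K v)" using assms finite_surj by (auto simp: cpx_def)
  moreover have "\<forall>F\<in>lk K v. finite F" using assms by (auto simp: cpx_def lk_def)
  moreover have "\<forall>F\<in>lk K v. \<forall>G. G \<subseteq> F \<longrightarrow> G \<in> lk K v"
  proof (intro ballI allI impI)
    fix F G assume "F \<in> lk K v" "G \<subseteq> F"
    then have "insert v G \<subseteq> insert v F" "insert v F \<in> K" "v \<notin> G" by (auto simp: lk_def)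
    then show "G \<in> lk K v" using assms by (auto simp: cpx_def lk_def)
  qed
  ultimately show ?thesis by (simp add: cpx_def)
qed

lemma prj_linear: "Vector_Spaces.linear fscale fscale (prj v :: (nat set \<Rightarrow> 'a::field) \<Rightarrow> _)"
proof -
  have "prj v (x + y) = prj v x + prj v y" for x y :: "nat set \<Rightarrow> 'a"
    by (simp add: prj_def fun_eq_iff)
  moreover have "prj v (fscale c x) = fscale c (prj v x)" for c and x :: "nat set \<Rightarrow> 'a"
    by (simp add: prj_def fscale_def fun_eq_iff)
  ultimately show ?thesis unfolding Vector_Spaces.linear_iff using fscale_vs by blast
qed

lemma phi_linear: "Vector_Spaces.linear fscale fscale (phi K v :: (nat set \<Rightarrow> 'a::field) \<Rightarrow> _)"
proof -
  have "phi K v (x + y) = phi K v x + phi K v y" for x y :: "nat set \<Rightarrow> 'a"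
    by (simp add: phi_def fun_eq_iff distrib_left)
  moreover have "phi K v (fscale c x) = fscale c (phi K v x)" for c and x :: "nat set \<Rightarrow> 'a"
    by (simp add: phi_def fscale_def fun_eq_iff mult.left_commute)
  ultimately show ?thesis unfolding Vector_Spaces.linear_iff using fscale_vs by blast
qed

lemma prj_chains: "c \<in> chains T K p \<Longrightarrow> prj v c \<in> chains T K p"
  by (auto simp: chains_def prj_def)

lemma prj_bd:
  assumes "\<And>F. v \<in> F \<Longrightarrow> x F = (0::'a::field)"
  shows "prj v (bd K x) = 0"
proof
  fix G show "prj v (bd K x) G = 0 G"
  proof (cases "v \<in> G \<and> G \<in> K")
    case True
    have "bd K x G = (\<Sum>w\<in>\<Union>K - G. if insert w G \<in> K then sg G w * x (insert w G) else 0)"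
      using True by (simp only: bd_sg if_True)
    also have "\<dots> = 0" using True assms by (intro sum.neutral) auto
    finally show ?thesis by (simp add: prj_def)
  next
    case False then show ?thesis by (auto simp: prj_def bd_def)
  qed
qed

lemma bd_del:
  assumes K: "cpx K" and x0: "\<And>F. v \<in> F \<Longrightarrow> x F = (0::'a::field)"
  shows "bd (del K v) x = bd K x"
proof
  fix G
  have fU: "finite (\<Union>K)" using cpx_fin[OF K] .
  have sub: "\<Union>(del K v) \<subseteq> \<Union>K" by (auto simp: del_def)
  show "bd (del K v) x G = bd K x G"
  proof (cases "G \<in> K")
    case False then show ?thesis by (simp add: bd_def del_def)
  next
    case GK: True
    show ?thesis
    proof (cases "v \<in> G")
      case True
      have "bd K x G = (\<Sum>w\<in>\<Union>K - G. if insert w G \<in> K then sg G w * x (insert w G) else 0)"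
        using GK by (simp only: bd_sg if_True)
      also have "\<dots> = 0" using True x0 by (intro sum.neutral) auto
      finally show ?thesis using True by (simp add: bd_def del_def)
    next
      case False
      have "bd (del K v) x G = (\<Sum>w\<in>\<Union>K - G. if insert w G \<in> del K v then sg G w * x (insert w G) else 0)"
        using bd_alt[OF fU sub, of x G] GK False by (simp add: del_def)
      also have "\<dots> = (\<Sum>w\<in>\<Union>K - G. if insert w G \<in> K then sg G w * x (insert w G) else 0)"
        by (rule sum.cong[OF refl]) (use False x0 in \<open>auto simp: del_def\<close>)
      also have "\<dots> = bd K x G" using GK by (simp only: bd_sg if_True)
      finally show ?thesis .
    qed
  qed
qed

lemma chains_del: "chains T (del K v) p = {x \<in> chains T K p. prj v x = 0}"
  by (auto simp: chains_def faces_def del_def prj_def fun_eq_iff)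

lemma phi_chains:
  assumes K: "cpx K" and c: "c \<in> chains T (lk K v) (p - 1)"
  shows "phi K v c \<in> chains T K p" "prj v (phi K v c) = phi K v c"
proof -
  show "prj v (phi K v c) = phi K v c" by (auto simp: prj_def phi_def fun_eq_iff)
  show "phi K v c \<in> chains T K p"
    unfolding chains_def
  proof (intro CollectI allI impI)
    fix F assume "phi K v c F \<noteq> 0"
    then have F: "v \<in> F" "F \<in> K" "c (F - {v}) \<noteq> 0" by (auto simp: phi_def split: if_splits)
    then have "F - {v} \<in> faces (lk K v) (p - 1)" using c by (auto simp: chains_def)
    then show "F \<in> faces K p" using cpx_card[OF K F(2) F(1)] F(2) by (auto simp: faces_def)
  qed
qed

lemma E_phi:
  assumes K: "cpx K" and x: "x \<in> chains T K p" "prj v x = x"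
  shows "\<exists>c \<in> chains T (lk K v) (p - 1). x = phi K v c"
proof
  define c where "c G = (if v \<notin> G \<and> insert v G \<in> K then sg G v * x (insert v G) else 0)" for G
  have xv: "x F = 0" if "v \<notin> F" for F using x(2) that by (metis prj_def)
  have xK: "x F = 0" if "F \<notin> K" for F using x(1) that by (auto simp: chains_def faces_def)
  show "c \<in> chains T (lk K v) (p - 1)"
    unfolding chains_def
  proof (intro CollectI allI impI)
    fix G assume "c G \<noteq> 0"
    then have G: "v \<notin> G" "insert v G \<in> K" "x (insert v G) \<noteq> 0" by (auto simp: c_def split: if_splits)
    then have "insert v G \<in> faces K p" using x(1) by (auto simp: chains_def)
    moreover have "finite G" using G K by (auto simp: cpx_def)
    ultimately show "G \<in> faces (lk K v) (p - 1)" using G by (auto simp: faces_def lk_def)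
  qed
  show "x = phi K v c"
  proof
    fix F show "x F = phi K v c F"
    proof (cases "v \<in> F \<and> F \<in> K")
      case True
      have ins: "insert v (F - {v}) = F" using True by auto
      show ?thesis using True ins by (simp add: phi_def c_def mult.assoc[symmetric] sg_sq)
    next
      case False then show ?thesis using xv xK by (auto simp: phi_def)
    qed
  qed
qed

lemma phi_inj:
  assumes c: "\<And>G. c G \<noteq> 0 \<Longrightarrow> G \<in> lk K v" and z: "phi K v c = (0 :: nat set \<Rightarrow> 'a::field)"
  shows "c = 0"
proof
  fix G show "c G = 0 G"
  proof (rule ccontr)
    assume "c G \<noteq> 0 G"
    then have G: "c G \<noteq> 0" "v \<notin> G" "insert v G \<in> K" using c by (auto simp: lk_def)
    have "phi K v c (insert v G) = sg G v * c G" using G by (simp add: phi_def)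
    then show False using z G(1) by (simp add: sg_nz)
  qed
qed

lemma phi_bd:
  fixes c :: "nat set \<Rightarrow> 'a::field"
  assumes K: "cpx K"
  shows "prj v (bd K (phi K v c)) = - phi K v (bd (lk K v) c)"
proof
  fix G
  show "prj v (bd K (phi K v c)) G = (- phi K v (bd (lk K v) c)) G"
  proof (cases "v \<in> G \<and> G \<in> K")
    case False
    then show ?thesis by (auto simp: prj_def phi_def bd_def)
  next
    case True
    let ?U = "\<Union>K"
    define H where "H = G - {v}"
    have fU: "finite ?U" using cpx_fin[OF K] .
    have GH: "G = insert v H" "v \<notin> H" using True by (auto simp: H_def)
    have fH: "finite H" using True K by (auto simp: cpx_def H_def)
    have vU: "v \<in> ?U" using True by blast
    have subU: "\<Union>(lk K v) \<subseteq> ?U" by (auto simp: lk_def)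
    have UH: "?U - H = insert v (?U - G)" using vU GH by auto
    have "bd (lk K v) c H = (\<Sum>w\<in>?U - H. if insert w H \<in> lk K v then sg H w * c (insert w H) else 0)"
      using bd_alt[OF fU subU, of c H] GH True by (simp add: lk_def)
    also have "\<dots> = (\<Sum>w\<in>?U - G. if insert w H \<in> lk K v then sg H w * c (insert w H) else 0)"
      unfolding UH using fU True by (subst sum.insert) (auto simp: lk_def)
    finally have bl: "bd (lk K v) c H = (\<Sum>w\<in>?U - G. if insert w H \<in> lk K v then sg H w * c (insert w H) else 0)" .
    have "bd K (phi K v c) G = (\<Sum>w\<in>?U - G. if insert w G \<in> K then sg G w * phi K v c (insert w G) else 0)"
      using True by (simp only: bd_sg if_True)
    also have "\<dots> = (\<Sum>w\<in>?U - G. - (sg H v * (if insert w H \<in> lk K v then sg H w * c (insert w H) else 0)))"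
    proof (rule sum.cong[OF refl])
      fix w assume w: "w \<in> ?U - G"
      have wv: "w \<noteq> v" "w \<notin> H" using w GH by auto
      have e1: "insert w G = insert v (insert w H)" using GH by auto
      have e2: "insert w G - {v} = insert w H" using GH wv by auto
      have lkc: "insert w H \<in> lk K v \<longleftrightarrow> insert w G \<in> K" using e1 GH wv by (auto simp: lk_def)
      have s1: "sg G w = (if v < w then - sg H w else (sg H w :: 'a))"
        using sg_insert[OF fH GH(2), of w] GH by simp
      have s2: "sg (insert w H) v = (if w < v then - sg H v else (sg H v :: 'a))"
        using sg_insert[OF fH wv(2), of v] by simp
      show "(if insert w G \<in> K then sg G w * phi K v c (insert w G) else 0) =
            - (sg H v * (if insert w H \<in> lk K v then sg H w * c (insert w H) else 0))"
      proof (cases "insert w G \<in> K")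
        case False then show ?thesis using lkc by simp
      next
        case True
        have ph: "phi K v c (insert w G) = sg (insert w H) v * c (insert w H)"
          using True e2 GH(1) by (simp add: phi_def)
        show ?thesis using True lkc ph s1 s2 wv(1)
          by (cases "v < w") (auto simp: algebra_simps)
      qed
    qed
    also have "\<dots> = - (sg H v * bd (lk K v) c H)"
      unfolding bl by (simp add: sum_negf sum_distrib_left)
    finally have "bd K (phi K v c) G = - (sg H v * bd (lk K v) c H)" .
    moreover have "phi K v (bd (lk K v) c) G = sg H v * bd (lk K v) c H"
      using True by (simp add: phi_def H_def)
    ultimately show ?thesis using True by (simp add: prj_def)
  qed
qed




lemma dim_zero: "VS.dim {0 :: nat set \<Rightarrow> 'a::field} = 0"
proof -
  have "card {} = VS.dim {0 :: nat set \<Rightarrow> 'a}"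
    using VS.basis_card_eq_dim[of "{}" "{0::nat set \<Rightarrow> 'a}"] by (simp add: VS.span_empty VS.independent_empty)
  then show ?thesis by simp
qed

lemma dim_inj:
  fixes f :: "(nat set \<Rightarrow> 'a::field) \<Rightarrow> (nat set \<Rightarrow> 'a)"
  assumes lin: "Vector_Spaces.linear fscale fscale f" and sub: "VS.subspace S"
    and fin: "finite T" "S \<subseteq> VS.span T"
    and inj: "\<And>x. x \<in> S \<Longrightarrow> f x = 0 \<Longrightarrow> x = 0"
  shows "VS.dim (f ` S) = VS.dim S"
proof -
  have "{x \<in> S. f x = 0} = {0}"
    using inj VS.subspace_0[OF sub] module_hom.zero[OF lin[unfolded module_hom_iff_linear[symmetric]]] by auto
  then show ?thesis using RN[OF lin sub fin] dim_zero by simp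
qed

lemma sub_ker:
  fixes f :: "(nat set \<Rightarrow> 'a::field) \<Rightarrow> (nat set \<Rightarrow> 'a)"
  assumes lin: "Vector_Spaces.linear fscale fscale f" and sub: "VS.subspace S"
  shows "VS.subspace {x \<in> S. f x = 0}"
proof -
  interpret L: linear "fscale::'a\<Rightarrow>_" fscale f by (rule lin)
  show ?thesis using sub by (auto simp: VS.subspace_def L.add L.scale)
qed

lemma sub_img:
  fixes f :: "(nat set \<Rightarrow> 'a::field) \<Rightarrow> (nat set \<Rightarrow> 'a)"
  assumes lin: "Vector_Spaces.linear fscale fscale f" and sub: "VS.subspace S"
  shows "VS.subspace (f ` S)"
  using module_hom.subspace_image[OF lin[unfolded module_hom_iff_linear[symmetric]] sub] .

lemma bd_neg: "bd K (- x) = - bd K (x :: nat set \<Rightarrow> 'a::field)"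
  by (rule module_hom.neg[OF bd_linear[unfolded module_hom_iff_linear[symmetric]]])

lemma phi_neg: "phi K v (- x) = - phi K v (x :: nat set \<Rightarrow> 'a::field)"
  by (rule module_hom.neg[OF phi_linear[unfolded module_hom_iff_linear[symmetric]]])

lemma prj_neg: "prj v (- x) = - prj v (x :: nat set \<Rightarrow> 'a::field)"
  by (rule module_hom.neg[OF prj_linear[unfolded module_hom_iff_linear[symmetric]]])

lemma chains_neg: "c \<in> chains T K p \<Longrightarrow> - c \<in> chains T K p"
  by (auto simp: chains_def)

lemma decomp:
  fixes K :: "nat set set" and v :: nat
  assumes K: "cpx K"
  shows "acyc TYPE('a::field) (lk K v) \<Longrightarrow> rhdim TYPE('a) K p = rhdim TYPE('a) (del K v) p"
    and "acyc TYPE('a) (del K v) \<Longrightarrow> rhdim TYPE('a) K p = rhdim TYPE('a) (lk K v) (p - 1)"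
proof -
  have finK: "finite K" using K by (simp add: cpx_def)
  have Kl: "cpx (lk K v)" using cpx_lk[OF K] .
  have finL: "finite (lk K v)" using Kl by (simp add: cpx_def)
  interpret S: splitcx "chains TYPE('a) K" "bd K" "prj v"
  proof (rule splitcx.intro)
    show "VS.subspace (chains TYPE('a) K p)" for p by (rule chains_sub)
    show "\<exists>T. finite T \<and> chains TYPE('a) K p \<subseteq> VS.span T" for p by (rule chains_fin[OF finK])
    show "Vector_Spaces.linear fscale fscale (bd K :: (nat set \<Rightarrow> 'a) \<Rightarrow> _)" by (rule bd_linear)
    show "Vector_Spaces.linear fscale fscale (prj v :: (nat set \<Rightarrow> 'a) \<Rightarrow> _)" by (rule prj_linear)
    show "x \<in> chains TYPE('a) K (p + 1) \<Longrightarrow> bd K x \<in> chains TYPE('a) K p" for p x by (rule bd_chains[OF K])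
    show "bd K (bd K x) = 0" for x :: "nat set \<Rightarrow> 'a" by (rule bdbd[OF K])
    show "x \<in> chains TYPE('a) K p \<Longrightarrow> prj v x \<in> chains TYPE('a) K p" for p x by (rule prj_chains)
    show "prj v (prj v x) = prj v x" for x :: "nat set \<Rightarrow> 'a" by (simp add: prj_def fun_eq_iff)
    show "prj v (bd K x) = 0" if "prj v x = 0" for x :: "nat set \<Rightarrow> 'a"
    proof (rule prj_bd)
      fix F assume "v \<in> F"
      then show "x F = 0" using fun_cong[OF that, of F] by (simp add: prj_def)
    qed
  qed
  have Deq: "S.D q = chains TYPE('a) (del K v) q" for q
    by (simp add: S.D_def chains_del)
  have D0: "x F = 0" if "x \<in> S.D q" "v \<in> F" for x q F
  proof -
    have "prj v x F = 0" using that(1) by (simp add: S.D_def)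
    then show ?thesis using that(2) by (simp add: prj_def)
  qed
  have bdD: "x \<in> S.D q \<Longrightarrow> bd (del K v) x = bd K x" for x q
    by (rule bd_del[OF K]) (rule D0[of x q])
  have hD: "S.hD p = rhdim TYPE('a) (del K v) p"
  proof -
    have "{x \<in> S.D p. bd K x = 0} = {x \<in> chains TYPE('a) (del K v) p. bd (del K v) x = 0}"
      using bdD Deq by auto
    moreover have "bd K ` S.D (p+1) = bd (del K v) ` chains TYPE('a) (del K v) (p+1)"
      unfolding Deq[symmetric] by (rule image_cong[OF refl bdD[symmetric]])
    ultimately show ?thesis unfolding S.hD_def rhdim_def by simp
  qed
  have hC: "S.hC p = rhdim TYPE('a) K p"
    unfolding S.hC_def rhdim_def by simp
  have Eeq: "S.E q = phi K v ` chains TYPE('a) (lk K v) (q - 1)" for q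
  proof
    show "S.E q \<subseteq> phi K v ` chains TYPE('a) (lk K v) (q - 1)"
      using E_phi[OF K] unfolding S.E_def by blast
    show "phi K v ` chains TYPE('a) (lk K v) (q - 1) \<subseteq> S.E q"
      using phi_chains[OF K] unfolding S.E_def by auto
  qed
  have phi0: "phi K v (0 :: nat set \<Rightarrow> 'a) = 0" by (simp add: phi_def fun_eq_iff)
  have Zset: "{x \<in> S.E q. prj v (bd K x) = 0} = phi K v ` {c \<in> chains TYPE('a) (lk K v) (q - 1). bd (lk K v) c = 0}" for q
  proof
    show "{x \<in> S.E q. prj v (bd K x) = 0} \<subseteq> phi K v ` {c \<in> chains TYPE('a) (lk K v) (q - 1). bd (lk K v) c = 0}"
    proof
      fix x assume x: "x \<in> {x \<in> S.E q. prj v (bd K x) = 0}"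
      then obtain c where c: "c \<in> chains TYPE('a) (lk K v) (q - 1)" "x = phi K v c" using Eeq by auto
      have "- phi K v (bd (lk K v) c) = 0" using x c phi_bd[OF K, of v c] by simp
      then have "phi K v (bd (lk K v) c) = 0" by simp
      then have "bd (lk K v) c = 0" using phi_inj[of "bd (lk K v) c" K v] bd_supp by blast
      then show "x \<in> phi K v ` {c \<in> chains TYPE('a) (lk K v) (q - 1). bd (lk K v) c = 0}" using c by blast
    qed
    show "phi K v ` {c \<in> chains TYPE('a) (lk K v) (q - 1). bd (lk K v) c = 0} \<subseteq> {x \<in> S.E q. prj v (bd K x) = 0}"
    proof
      fix x assume "x \<in> phi K v ` {c \<in> chains TYPE('a) (lk K v) (q - 1). bd (lk K v) c = 0}"
      then obtain c where c: "c \<in> chains TYPE('a) (lk K v) (q - 1)" "bd (lk K v) c = 0" "x = phi K v c" by auto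
      have "x \<in> S.E q" using Eeq c by auto
      moreover have "prj v (bd K x) = 0" using c phi_bd[OF K, of v c] phi0 by simp
      ultimately show "x \<in> {x \<in> S.E q. prj v (bd K x) = 0}" by simp
    qed
  qed
  have Bset: "(\<lambda>x. prj v (bd K x)) ` S.E (q+1) = phi K v ` (bd (lk K v) ` chains TYPE('a) (lk K v) q)" for q
  proof
    show "(\<lambda>x. prj v (bd K x)) ` S.E (q+1) \<subseteq> phi K v ` (bd (lk K v) ` chains TYPE('a) (lk K v) q)"
    proof
      fix y assume "y \<in> (\<lambda>x. prj v (bd K x)) ` S.E (q+1)"
      then obtain c where c: "c \<in> chains TYPE('a) (lk K v) q" "y = prj v (bd K (phi K v c))" using Eeq by auto
      have "y = phi K v (bd (lk K v) (- c))" using c phi_bd[OF K, of v c] by (simp add: bd_neg phi_neg)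
      then show "y \<in> phi K v ` (bd (lk K v) ` chains TYPE('a) (lk K v) q)" using chains_neg[OF c(1)] by blast
    qed
    show "phi K v ` (bd (lk K v) ` chains TYPE('a) (lk K v) q) \<subseteq> (\<lambda>x. prj v (bd K x)) ` S.E (q+1)"
    proof
      fix y assume "y \<in> phi K v ` (bd (lk K v) ` chains TYPE('a) (lk K v) q)"
      then obtain c where c: "c \<in> chains TYPE('a) (lk K v) q" "y = phi K v (bd (lk K v) c)" by auto
      have "y = prj v (bd K (phi K v (- c)))" using c phi_bd[OF K, of v "- c"] by (simp add: bd_neg phi_neg)
      moreover have "phi K v (- c) \<in> S.E (q+1)" using Eeq chains_neg[OF c(1)] by auto
      ultimately show "y \<in> (\<lambda>x. prj v (bd K x)) ` S.E (q+1)" by blast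
    qed
  qed
  have hE: "S.hE p = rhdim TYPE('a) (lk K v) (p - 1)"
  proof -
    let ?Z = "{c \<in> chains TYPE('a) (lk K v) (p - 1). bd (lk K v) c = 0}"
    let ?B = "bd (lk K v) ` chains TYPE('a) (lk K v) p"
    obtain T where T: "finite T" "chains TYPE('a) (lk K v) (p - 1) \<subseteq> VS.span T"
      using chains_fin[OF finL] by blast
    have suppC: "\<And>c G. c \<in> chains TYPE('a) (lk K v) (p - 1) \<Longrightarrow> c G \<noteq> 0 \<Longrightarrow> G \<in> lk K v"
      by (auto simp: chains_def faces_def)
    have BC: "?B \<subseteq> chains TYPE('a) (lk K v) (p - 1)"
      using bd_chains[OF Kl, where p="p - 1"] by auto
    have dZ: "VS.dim (phi K v ` ?Z) = VS.dim ?Z"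
    proof (rule dim_inj[OF phi_linear sub_ker[OF bd_linear chains_sub] T(1)])
      show "?Z \<subseteq> VS.span T" using T(2) by blast
      fix x assume "x \<in> ?Z" "phi K v x = 0"
      then show "x = 0" using phi_inj[of x K v] suppC by blast
    qed
    have dB: "VS.dim (phi K v ` ?B) = VS.dim ?B"
    proof (rule dim_inj[OF phi_linear sub_img[OF bd_linear chains_sub] T(1)])
      show "?B \<subseteq> VS.span T" using T(2) BC by blast
      fix x assume "x \<in> ?B" "phi K v x = 0"
      then show "x = 0" using phi_inj[of x K v] suppC BC by blast
    qed
    have "S.hE p = VS.dim (phi K v ` ?Z) - VS.dim (phi K v ` ?B)"
      unfolding S.hE_def Zset Bset ..
    also have "\<dots> = rhdim TYPE('a) (lk K v) (p - 1)"
      unfolding dZ dB rhdim_def by simp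
    finally show ?thesis .
  qed
  show "acyc TYPE('a) (lk K v) \<Longrightarrow> rhdim TYPE('a) K p = rhdim TYPE('a) (del K v) p"
  proof -
    assume ac: "acyc TYPE('a) (lk K v)"
    have "S.hC p = S.hD p"
    proof (rule S.split_a)
      fix q z assume z: "z \<in> S.E q" "prj v (bd K z) = 0"
      then have "z \<in> phi K v ` {c \<in> chains TYPE('a) (lk K v) (q - 1). bd (lk K v) c = 0}"
        using Zset by blast
      then obtain c where c: "c \<in> chains TYPE('a) (lk K v) (q - 1)" "bd (lk K v) c = 0" "z = phi K v c" by auto
      then have "c \<in> bd (lk K v) ` chains TYPE('a) (lk K v) (q - 1 + 1)" using ac unfolding acyc_def by blast
      then have "z \<in> phi K v ` (bd (lk K v) ` chains TYPE('a) (lk K v) q)" using c(3) by simp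
      then show "z \<in> (\<lambda>x. prj v (bd K x)) ` S.E (q + 1)" using Bset by blast
    qed
    then show ?thesis using hC hD by simp
  qed
  show "acyc TYPE('a) (del K v) \<Longrightarrow> rhdim TYPE('a) K p = rhdim TYPE('a) (lk K v) (p - 1)"
  proof -
    assume ac: "acyc TYPE('a) (del K v)"
    have "S.hC p = S.hE p"
    proof (rule S.split_b)
      fix q z assume z: "z \<in> S.D q" "bd K z = 0"
      then have "z \<in> chains TYPE('a) (del K v) q" "bd (del K v) z = 0" using Deq bdD by auto
      then obtain y where y: "y \<in> chains TYPE('a) (del K v) (q+1)" "z = bd (del K v) y"
        using ac unfolding acyc_def by blast
      have "y \<in> S.D (q+1)" using y Deq by simp
      moreover have "z = bd K y" using y bdD[OF \<open>y \<in> S.D (q+1)\<close>] by simp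
      ultimately show "z \<in> bd K ` S.D (q + 1)" by blast
    qed
    then show ?thesis using hC hE by simp
  qed
qed




definition WC :: "nat set \<Rightarrow> nat set set \<Rightarrow> nat set set" where
  "WC V Ws = {F. F \<subseteq> V \<and> (\<exists>X\<in>Ws. F \<inter> X = {})}"

lemma cpx_WC: "finite V \<Longrightarrow> cpx (WC V Ws)"
proof -
  assume fV: "finite V"
  have "WC V Ws \<subseteq> Pow V" by (auto simp: WC_def)
  then have "finite (WC V Ws)" using fV finite_subset by blast
  moreover have "\<forall>F\<in>WC V Ws. finite F" using fV finite_subset by (auto simp: WC_def)
  moreover have "\<forall>F\<in>WC V Ws. \<forall>G. G \<subseteq> F \<longrightarrow> G \<in> WC V Ws"
    by (auto simp: WC_def)
  ultimately show ?thesis by (simp add: cpx_def)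
qed

lemma del_WC: "del (WC V (f ` I)) v = WC (V - {v}) ((\<lambda>i. f i - {v}) ` I)"
  unfolding del_def WC_def by auto

lemma del_WC': "del (WC (V - S) ((\<lambda>i. f i - S) ` I)) v = WC (V - insert v S) ((\<lambda>i. f i - insert v S) ` I)"
  unfolding del_def WC_def by auto

lemma lk_WC: "v \<in> V \<Longrightarrow> lk (WC V (f ` I)) v = WC (V - {v}) (f ` {i \<in> I. v \<notin> f i})"
  unfolding lk_def WC_def by auto

lemma acyc_cone1:
  assumes "finite V" "x \<in> V" "\<And>i. i \<in> I \<Longrightarrow> x \<notin> f i"
  shows "acyc TYPE('a::field) (WC V (f ` I))"
proof (rule cone_acyc[OF cpx_WC[OF assms(1)]])
  fix F assume "F \<in> WC V (f ` I)"
  then show "insert x F \<in> WC V (f ` I)" using assms(2,3) unfolding WC_def by blast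
qed

lemma acyc_cone2:
  assumes "finite V" "x \<in> V" "i \<in> I" "f i = {}"
  shows "acyc TYPE('a::field) (WC V (f ` I))"
proof (rule cone_acyc[OF cpx_WC[OF assms(1)]])
  fix F assume "F \<in> WC V (f ` I)"
  then show "insert x F \<in> WC V (f ` I)" using assms(2,3,4) unfolding WC_def by blast
qed

lemma WC_noidx: "WC V (f ` {}) = {}"
  by (simp add: WC_def)

definition win :: "nat \<Rightarrow> nat \<Rightarrow> nat set" where
  "win t i = {i..<i+t}"

definition Om :: "nat \<Rightarrow> nat \<Rightarrow> nat \<Rightarrow> nat set set" where
  "Om a n t = WC {a+1..a+n} (win t ` {a+1..a+n-t+1})"

lemma Omega_Om: "1 \<le> t \<Longrightarrow> Omega n t = Om 0 n t"
  unfolding Omega_def Om_def WC_def win_def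
proof (intro set_eqI iffI, goal_cases)
  case (1 F)
  then obtain i where i: "i \<in> {1..n-t+1}" "F \<subseteq> {1..n} - {i..i+t-1}" by auto
  have "{i..i+t-1} = {i..<i+t}" using 1 by auto
  then show ?case using i by auto
next
  case (2 F)
  then obtain i where i: "i \<in> {1..n-t+1}" "F \<subseteq> {1..n}" "F \<inter> {i..<i+t} = {}" by auto
  have e: "{i..i+t-1} = {i..<i+t}" using 2 by auto
  have "F \<subseteq> {1..n} - {i..i+t-1}" unfolding e using i by auto
  then show ?case using i(1) by blast
qed

lemma step1:
  fixes a n t j :: nat
  assumes t: "1 \<le> t" "t + 1 \<le> n" and j: "j \<le> t - 1"
  shows "rhdim TYPE('a::field) (Om a n t) p =
    rhdim TYPE('a) (WC ({a+1..a+n} - {a+2..a+1+j}) ((\<lambda>i. win t i - {a+2..a+1+j}) ` {a+1..a+n-t+1})) p"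
  using j
proof (induction j)
  case 0
  have "{a+2..a+1+0} = {}" by simp
  then show ?case by (simp add: Om_def)
next
  case (Suc j)
  let ?V = "{a+1..a+n}" and ?I = "{a+1..a+n-t+1}" and ?S = "{a+2..a+1+j}"
  define v where "v = a+2+j"
  define K where "K = WC (?V - ?S) ((\<lambda>i. win t i - ?S) ` ?I)"
  have Kc: "cpx K" unfolding K_def by (rule cpx_WC) simp
  have vV: "v \<in> ?V - ?S" using Suc.prems t by (auto simp: v_def)
  have lkK: "lk K v = WC (?V - ?S - {v}) ((\<lambda>i. win t i - ?S) ` {i \<in> ?I. v \<notin> win t i - ?S})"
    unfolding K_def by (rule lk_WC[OF vV])
  have ac: "acyc TYPE('a) (lk K v)"
    unfolding lkK
  proof (rule acyc_cone1[where x="a+1"])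
    show "finite (?V - ?S - {v})" by simp
    show "a + 1 \<in> ?V - ?S - {v}" using t by (auto simp: v_def)
    fix i assume i: "i \<in> {i \<in> ?I. v \<notin> win t i - ?S}"
    show "a + 1 \<notin> win t i - ?S"
    proof
      assume "a + 1 \<in> win t i - ?S"
      then have "i = a + 1" using i by (auto simp: win_def)
      then have "v \<in> win t i - ?S" using Suc.prems by (auto simp: win_def v_def)
      then show False using i by simp
    qed
  qed
  have delK: "del K v = WC (?V - {a+2..a+1+Suc j}) ((\<lambda>i. win t i - {a+2..a+1+Suc j}) ` ?I)"
  proof -
    have e: "{a+2..a+1+Suc j} = insert v ?S" by (auto simp: v_def)
    show ?thesis unfolding K_def e by (rule del_WC'[where f="win t"])
  qed
  have "rhdim TYPE('a) (Om a n t) p = rhdim TYPE('a) K p"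
    using Suc by (simp add: K_def)
  also have "\<dots> = rhdim TYPE('a) (del K v) p" by (rule decomp(1)[OF Kc ac])
  finally show ?case unfolding delK .
qed




lemma step23:
  fixes a n t :: nat
  assumes t: "1 \<le> t" "t + 1 \<le> n"
  shows "n = t + 1 \<Longrightarrow> rhdim TYPE('a::field) (Om a n t) p = rhdim TYPE('a) {{}} (p - 1)"
    and "t + 2 \<le> n \<Longrightarrow> rhdim TYPE('a) (Om a n t) p = rhdim TYPE('a) (WC {a+t+2..a+n} (win t ` {a+t+2..a+n-t+1})) (p - 2)"
proof -
  let ?V = "{a+1..a+n}" and ?I = "{a+1..a+n-t+1}" and ?S = "{a+2..a+t}"
  define g where "g i = win t i - ?S" for i
  define X where "X = WC (?V - ?S) (g ` ?I)"
  have eS: "{a+2..a+1+(t-1)} = ?S" using t by simp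
  have X1: "rhdim TYPE('a) (Om a n t) p = rhdim TYPE('a) X p" for p
    using step1[OF t order.refl, of a p] unfolding eS X_def g_def by simp
  have Xc: "cpx X" unfolding X_def by (rule cpx_WC) simp
  have bV: "a + 1 \<in> ?V - ?S" using t by simp
  have delX: "del X (a+1) = WC (?V - ?S - {a+1}) ((\<lambda>i. g i - {a+1}) ` ?I)"
    unfolding X_def by (rule del_WC)
  have acX: "acyc TYPE('a) (del X (a+1))"
    unfolding delX
  proof (rule acyc_cone2[where x="a+t+1" and i="a+1"])
    show "finite (?V - ?S - {a+1})" by simp
    show "a + t + 1 \<in> ?V - ?S - {a+1}" using t by auto
    show "a + 1 \<in> ?I" using t by simp
    show "g (a + 1) - {a + 1} = {}" by (auto simp: g_def win_def)
  qed
  define V1 where "V1 = ?V - ?S - {a+1}"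
  define I1 where "I1 = {i \<in> ?I. a + 1 \<notin> g i}"
  have lkX: "lk X (a+1) = WC V1 (g ` I1)"
    unfolding X_def V1_def I1_def by (rule lk_WC[OF bV])
  have X2: "rhdim TYPE('a) X p = rhdim TYPE('a) (WC V1 (g ` I1)) (p - 1)" for p
    using decomp(2)[OF Xc acX] lkX by simp
  show "n = t + 1 \<Longrightarrow> rhdim TYPE('a) (Om a n t) p = rhdim TYPE('a) {{}} (p - 1)"
  proof -
    assume n: "n = t + 1"
    have V1e: "V1 = {a+t+1}" using n t by (auto simp: V1_def)
    have I1e: "a + 2 \<in> I1" using n t by (auto simp: I1_def g_def win_def)
    have g2: "g (a+2) = {a+t+1}" using t by (auto simp: g_def win_def)
    have "WC V1 (g ` I1) = {{}}"
    proof
      show "WC V1 (g ` I1) \<subseteq> {{}}"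
      proof
        fix F assume "F \<in> WC V1 (g ` I1)"
        then obtain i where i: "F \<subseteq> V1" "i \<in> I1" "F \<inter> g i = {}" by (auto simp: WC_def)
        have "i = a + 2" using i(2) n t by (auto simp: I1_def g_def win_def)
        then show "F \<in> {{}}" using i V1e g2 by auto
      qed
      show "{{}} \<subseteq> WC V1 (g ` I1)" using I1e by (auto simp: WC_def)
    qed
    then show ?thesis using X1 X2 by simp
  qed
  show "t + 2 \<le> n \<Longrightarrow> rhdim TYPE('a) (Om a n t) p = rhdim TYPE('a) (WC {a+t+2..a+n} (win t ` {a+t+2..a+n-t+1})) (p - 2)"
  proof -
    assume n: "t + 2 \<le> n"
    define L where "L = WC V1 (g ` I1)"
    have Lc: "cpx L" unfolding L_def V1_def by (rule cpx_WC) simp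
    have cV: "a + t + 1 \<in> V1" using n t by (auto simp: V1_def)
    have delL: "del L (a+t+1) = WC (V1 - {a+t+1}) ((\<lambda>i. g i - {a+t+1}) ` I1)"
      unfolding L_def by (rule del_WC)
    have acL: "acyc TYPE('a) (del L (a+t+1))"
      unfolding delL
    proof (rule acyc_cone2[where x="a+t+2" and i="a+2"])
      show "finite (V1 - {a+t+1})" by (simp add: V1_def)
      show "a + t + 2 \<in> V1 - {a+t+1}" using n t by (auto simp: V1_def)
      show "a + 2 \<in> I1" using n t by (auto simp: I1_def g_def win_def)
      show "g (a + 2) - {a + t + 1} = {}" by (auto simp: g_def win_def)
    qed
    have lkL: "lk L (a+t+1) = WC (V1 - {a+t+1}) (g ` {i \<in> I1. a+t+1 \<notin> g i})"
      unfolding L_def by (rule lk_WC[OF cV])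
    have L2: "rhdim TYPE('a) L q = rhdim TYPE('a) (lk L (a+t+1)) (q - 1)" for q
      using decomp(2)[OF Lc acL] by simp
    have eV: "V1 - {a+t+1} = {a+t+2..a+n}" by (auto simp: V1_def)
    have eI: "{i \<in> I1. a+t+1 \<notin> g i} = {a+t+2..a+n-t+1}"
      using t by (auto simp: I1_def g_def win_def)
    have eg: "g ` {a+t+2..a+n-t+1} = win t ` {a+t+2..a+n-t+1}"
      by (rule image_cong[OF refl]) (auto simp: g_def win_def)
    have "lk L (a+t+1) = WC {a+t+2..a+n} (win t ` {a+t+2..a+n-t+1})"
      unfolding lkL eV eI eg ..
    then show ?thesis using X1[of p] X2[of p] L2[of "p - 1"] unfolding L_def by simp
  qed
qed




definition fm :: "'a::field itself \<Rightarrow> nat \<Rightarrow> nat \<Rightarrow> int \<Rightarrow> nat" where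
  "fm T n t p = (if n mod (t + 1) = 0 then rhdim T {{}} (p + 1 - 2 * (int n div (int t + 1)))
     else if n mod (t + 1) = t then rhdim T {{}} (p + 2 - 2 * ((int n + 1) div (int t + 1)))
     else 0)"

lemma fm_shift:
  assumes "t + 1 \<le> n"
  shows "fm T n t p = fm T (n - (t+1)) t (p - 2)"
proof -
  have m: "n mod (t+1) = (n - (t+1)) mod (t+1)" using assms by (simp add: le_mod_geq)
  have i1: "int n = int (n - (t+1)) + (int t + 1)" using assms by simp
  have d1: "int n div (int t + 1) = int (n - (t+1)) div (int t + 1) + 1"
    unfolding i1 by (rule div_add_self2) simp
  have i2: "int n + 1 = (int (n - (t+1)) + 1) + (int t + 1)" using assms by simp
  have d2: "(int n + 1) div (int t + 1) = (int (n - (t+1)) + 1) div (int t + 1) + 1"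
    unfolding i2 by (rule div_add_self2) simp
  show ?thesis unfolding fm_def m d1 d2 by (simp add: algebra_simps)
qed

lemma Om_tt: "1 \<le> t \<Longrightarrow> Om a t t = {{}}"
proof -
  assume t: "1 \<le> t"
  have e: "win t (a+1) = {a+1..a+t}" by (auto simp: win_def)
  have "Om a t t = WC {a+1..a+t} {win t (a+1)}" by (simp add: Om_def)
  then have "Om a t t = WC {a+1..a+t} {{a+1..a+t}}" unfolding e .
  also have "\<dots> = {{}}" unfolding WC_def by blast
  finally show ?thesis .
qed

lemma main:
  fixes t :: nat
  assumes "1 \<le> t"
  shows "t \<le> n \<Longrightarrow> rhdim TYPE('a::field) (Om a n t) p = fm TYPE('a) n t p"
proof (induction n arbitrary: a p rule: less_induct)
  case (less n)
  consider "n = t" | "n = t + 1" | "t + 2 \<le> n \<and> n \<le> 2 * t" | "2 * t + 1 \<le> n"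
    using less.prems by linarith
  then show ?case
  proof cases
    case 1
    have "int t + 1 = 1 * (int t + 1)" by simp
    then have "(int t + 1) div (int t + 1) = 1" using assms by simp
    then show ?thesis using 1 assms by (simp add: fm_def Om_tt)
  next
    case 2
    have "rhdim TYPE('a) (Om a n t) p = rhdim TYPE('a) {{}} (p - 1)"
      using step23(1)[OF assms _ 2, of a p, where 'a='a] 2 by simp
    moreover have "(int t + 1) div (int t + 1) = 1" using assms by simp
    ultimately show ?thesis using 2 by (simp add: fm_def algebra_simps)
  next
    case 3
    then have "{a+t+2..a+n-t+1} = {}" by auto
    then have "WC {a+t+2..a+n} (win t ` {a+t+2..a+n-t+1}) = {}"
      by (simp add: WC_def)
    then have "rhdim TYPE('a) (Om a n t) p = 0"
      using step23(2)[OF assms _, of n a p, where 'a='a] 3 rhdim_empty[where 'a='a] by simp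
    moreover have "n mod (t+1) = n - (t+1)"
    proof -
      have "n - (t+1) < t + 1" using 3 by linarith
      then show ?thesis using 3 le_mod_geq[of "t+1" n] by simp
    qed
    moreover have "n - (t+1) \<noteq> t" "n - (t+1) \<noteq> 0" using 3 by linarith+
    ultimately show ?thesis by (simp add: fm_def)
  next
    case 4
    have e: "WC {a+t+2..a+n} (win t ` {a+t+2..a+n-t+1}) = Om (a+t+1) (n - (t+1)) t"
    proof -
      have "a + t + 1 + 1 = a + t + 2" "a + t + 1 + (n - (t+1)) = a + n"
           "a + t + 1 + (n - (t+1)) - t + 1 = a + n - t + 1" using 4 by auto
      then show ?thesis unfolding Om_def by simp
    qed
    have "rhdim TYPE('a) (Om a n t) p = rhdim TYPE('a) (Om (a+t+1) (n - (t+1)) t) (p - 2)"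
    proof -
      have "t + 1 \<le> n" "t + 2 \<le> n" using 4 assms by linarith+
      then show ?thesis using step23(2)[OF assms _, of n a p, where 'a='a] e by simp
    qed
    also have "\<dots> = fm TYPE('a) (n - (t+1)) t (p - 2)"
      using less.IH[of "n - (t+1)"] 4 assms by simp
    also have "\<dots> = fm TYPE('a) n t p"
    proof -
      have "t + 1 \<le> n" using 4 by linarith
      from fm_shift[OF this, of "TYPE('a)" p] show ?thesis by simp
    qed
    finally show ?thesis .
  qed
qed

theorem mainTheorem2:
  fixes n t :: nat and p :: int
  assumes "1 \<le> t" and "t \<le> n"
  shows "rhdim TYPE('k::field) (Omega n t) p =
    (if n mod (t + 1) = 0 then rhdim TYPE('k) {{}} (p + 1 - 2 * (int n div (int t + 1)))
     else if n mod (t + 1) = t then rhdim TYPE('k) {{}} (p + 2 - 2 * ((int n + 1) div (int t + 1)))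
     else 0)"
  using main[OF assms(1) assms(2), of 0 p] Omega_Om[OF assms(1), of n] by (simp add: fm_def)


end
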